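(* Consider the semi-discrete finite volume scheme with Lax–Friedrichs flux for the multicomponent compressible Euler system described in the context. Assume $\rho_{i,K}(0)>0$ for all cells $K\in\mathcal{T}_h$ and all $i=1,\dots,\mathrm{n}$, and assume that the discrete velocity satisfies $\mathbf{u}_h=\mathbf{m}_h/\rho_h\in L^2(0,T;L^\infty(\Omega))$. Then there is a constant $\bar\rho_h>0$ such that the numerical solution satisfies \[ \rho_{i,K}(t)\ge \bar\rho_h>0\qquad\text{for all }K\in\mathcal{T}_h,\ t\in[0,T],\ i=1,\dots,\mathrm{n}. \]
   Context: Domain: $\Omega=([0,1]|_{\{0,1\}})^N$, $N\in\{1,2,3\}$ (flat torus, periodic). Multicomponent Euler system for $\mathrm{n}$ species: unknowns partial densities $\rho_i$, momentum $\mathbf{m}=\rho\mathbf{u}$, total energy $\mathcal{E}$, with $\rho=\sum_{i=1}^{\mathrm{n}}\rho_i$: $\partial_t\rho_i+\nabla\cdot(\rho_i\mathbf{u})=0$, $\partial_t\mathbf{m}+\nabla\cdot(\rho\mathbf{u}\otimes\mathbf{u}+p\mathbb{I})=0$, $\partial_t\mathcal{E}+\nabla\cdot((\mathcal{E}+p)\mathbf{u})=0$. Write $\mathbf{U}=(\rho_1,\dots,\rho_{\mathrm{n}},\mathbf{m},\mathcal{E})$ and $\mathbf{f}(\mathbf{U})=(\rho_1\mathbf{u},\dots,\rho_{\mathrm{n}}\mathbf{u},\rho\mathbf{u}\otimes\mathbf{u}+p\mathbb{I},(\mathcal{E}+p)\mathbf{u})$. Closure: $p=\sum_i\rho_i r_i\mathbb{T}$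 with constants $r_i>0$, and $\mathcal{E}=\sum_i\rho_i(e_{0i}+c_{vi}\mathbb{T})+\frac12\rho|\mathbf{u}|^2$ with constants $e_{0i}$, $c_{vi}>0$; $c_{pi}=c_{vi}+r_i$. Scheme: uniform Cartesian mesh $\mathcal{T}_h$ of $\Omega$ with mesh size $h$, cells $K$ with $|K|=h^N$, interfaces $S_{KL}=\partial K\cap\partial L$ with $|S_{KL}|=h^{N-1}$, unit normal $\mathbf{n}_{KL}$ from $K$ to $L$, $\mathcal{N}(K)$ the set of cells sharing a face with $K$. The piecewise constant solution $\mathbf{U}_h(t)$ has value $\mathbf{U}_K(t)$ on $K$, $\mathbf{U}_K(0)$ is the cell average of the initial data, and $|K|\frac{d}{dt}\mathbf{U}_K+\sum_{L\in\mathcal{N}(K)}|S_{KL}|\mathbf{F}_{KL}=0$, with $\mathbf{F}_{KL}=\frac{\mathbf{f}(\mathbf{U}_K)+\mathbf{f}(\mathbf{U}_L)}{2}\cdot\mathbf{n}_{KL}-\frac{\lambda_{KL}}{2}(\mathbf{U}_L-\mathbf{U}_K)$, $\lambda_{KL}=\max(|\mathbf{u}_K|+c_{\rm mix}(\mathbf{U}_K),|\mathbf{u}_L|+c_{\rm mix}(\mathbf{U}_L))$, $\mathbf{u}_K=\mathbf{m}_K/\rho_K$, $c_{\rm mix}^2=\gamma_{\rm mix}p/\rho$, $\gamma_{\rm mix}=\sum_i\rho_ic_{pi}/\sum_i\rho_ic_{vi}$. The global bound $\lambda=\max_K(|\mathbf{u}_K|+c_{\rm mix}(\mathbf{U}_K))\ge\lambda_{KL}$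 may be used as the viscosity coefficient. $\rho_{i,K}(t)$ denotes the $\rho_i$-component of $\mathbf{U}_K(t)$. *)

theory Defs
  imports "HOL-Analysis.Analysis"
begin

text \<open>Uniform Cartesian mesh of the flat torus [0,1]^N with M cells per direction,
  h = 1/M.  Cells are indexed by multi-indices K :: 'd \<Rightarrow> nat with K j < M,
  where the finite type 'd indexes the N = CARD('d) space directions.\<close>

definition cells :: "nat \<Rightarrow> ('d \<Rightarrow> nat) set" where
  "cells M = {K. \<forall>j. K j < M}"

text \<open>Periodic neighbour of K across the face in direction j, on the side s
  (s = True: +e_j, s = False: -e_j).\<close>
definition shift :: "nat \<Rightarrow> ('d \<Rightarrow> nat) \<Rightarrow> 'd \<Rightarrow> bool \<Rightarrow> ('d \<Rightarrow> nat)" where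
  "shift M K j s = K(j := (if s then (K j + 1) mod M else (K j + M - 1) mod M))"

definition normal :: "'d::finite \<Rightarrow> bool \<Rightarrow> real^'d" where
  "normal j s = (\<chi> k. if k = j then (if s then 1 else -1) else 0)"

text \<open>Mixture quantities for a state (partial densities rs, momentum m, total energy E),
  with n species and species constants r, cv, e0 (cp i = cv i + r i).\<close>

definition rho_tot :: "nat \<Rightarrow> (nat \<Rightarrow> real) \<Rightarrow> real" where
  "rho_tot n rs = (\<Sum>i<n. rs i)"

definition vel :: "nat \<Rightarrow> (nat \<Rightarrow> real) \<Rightarrow> real^'d \<Rightarrow> real^'d" where
  "vel n rs m = (1 / rho_tot n rs) *\<^sub>R m"

definition temp :: "nat \<Rightarrow> (nat \<Rightarrow> real) \<Rightarrow> (nat \<Rightarrow> real)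
    \<Rightarrow> (nat \<Rightarrow> real) \<Rightarrow> real^'d \<Rightarrow> real \<Rightarrow> real" where
  "temp n cv e0 rs m E =
     (E - (\<Sum>i<n. rs i * e0 i) - 1/2 * rho_tot n rs * (norm (vel n rs m))\<^sup>2)
       / (\<Sum>i<n. rs i * cv i)"

definition pres :: "nat \<Rightarrow> (nat \<Rightarrow> real) \<Rightarrow> (nat \<Rightarrow> real) \<Rightarrow> (nat \<Rightarrow> real)
    \<Rightarrow> (nat \<Rightarrow> real) \<Rightarrow> real^'d \<Rightarrow> real \<Rightarrow> real" where
  "pres n r cv e0 rs m E = (\<Sum>i<n. rs i * r i) * temp n cv e0 rs m E"

definition gamma_mix :: "nat \<Rightarrow> (nat \<Rightarrow> real) \<Rightarrow> (nat \<Rightarrow> real) \<Rightarrow> (nat \<Rightarrow> real) \<Rightarrow> real" where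
  "gamma_mix n r cv rs = (\<Sum>i<n. rs i * (cv i + r i)) / (\<Sum>i<n. rs i * cv i)"

definition cmix_sq :: "nat \<Rightarrow> (nat \<Rightarrow> real) \<Rightarrow> (nat \<Rightarrow> real) \<Rightarrow> (nat \<Rightarrow> real)
    \<Rightarrow> (nat \<Rightarrow> real) \<Rightarrow> real^'d \<Rightarrow> real \<Rightarrow> real" where
  "cmix_sq n r cv e0 rs m E = gamma_mix n r cv rs * pres n r cv e0 rs m E / rho_tot n rs"

definition cmix :: "nat \<Rightarrow> (nat \<Rightarrow> real) \<Rightarrow> (nat \<Rightarrow> real) \<Rightarrow> (nat \<Rightarrow> real)
    \<Rightarrow> (nat \<Rightarrow> real) \<Rightarrow> real^'d \<Rightarrow> real \<Rightarrow> real" where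
  "cmix n r cv e0 rs m E = sqrt (cmix_sq n r cv e0 rs m E)"

type_synonym 'd state = "(nat \<Rightarrow> real) \<times> (real^'d) \<times> real"

definition wavespeed :: "nat \<Rightarrow> (nat \<Rightarrow> real) \<Rightarrow> (nat \<Rightarrow> real) \<Rightarrow> (nat \<Rightarrow> real)
    \<Rightarrow> 'd::finite state \<Rightarrow> real" where
  "wavespeed n r cv e0 U = (case U of (rs, m, E) \<Rightarrow> norm (vel n rs m) + cmix n r cv e0 rs m E)"

definition lamKL :: "nat \<Rightarrow> (nat \<Rightarrow> real) \<Rightarrow> (nat \<Rightarrow> real) \<Rightarrow> (nat \<Rightarrow> real)
    \<Rightarrow> 'd::finite state \<Rightarrow> 'd state \<Rightarrow> real" where
  "lamKL n r cv e0 UK UL = max (wavespeed n r cv e0 UK) (wavespeed n r cv e0 UL)"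

definition flux_rho :: "nat \<Rightarrow> (nat \<Rightarrow> real) \<Rightarrow> (nat \<Rightarrow> real) \<Rightarrow> (nat \<Rightarrow> real)
    \<Rightarrow> 'd::finite state \<Rightarrow> 'd state \<Rightarrow> real^'d \<Rightarrow> nat \<Rightarrow> real" where
  "flux_rho n r cv e0 UK UL nv i =
    (case UK of (rsK, mK, EK) \<Rightarrow> case UL of (rsL, mL, EL) \<Rightarrow>
      (rsK i * (vel n rsK mK \<bullet> nv) + rsL i * (vel n rsL mL \<bullet> nv)) / 2
      - lamKL n r cv e0 UK UL / 2 * (rsL i - rsK i))"

definition flux_m :: "nat \<Rightarrow> (nat \<Rightarrow> real) \<Rightarrow> (nat \<Rightarrow> real) \<Rightarrow> (nat \<Rightarrow> real)
    \<Rightarrow> 'd::finite state \<Rightarrow> 'd::finite state \<Rightarrow> real^'d \<Rightarrow> real^'d" where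
  "flux_m n r cv e0 UK UL nv =
    (case UK of (rsK, mK, EK) \<Rightarrow> case UL of (rsL, mL, EL) \<Rightarrow>
      (1/2) *\<^sub>R ((rho_tot n rsK * (vel n rsK mK \<bullet> nv)) *\<^sub>R vel n rsK mK
                  + pres n r cv e0 rsK mK EK *\<^sub>R nv
                + (rho_tot n rsL * (vel n rsL mL \<bullet> nv)) *\<^sub>R vel n rsL mL
                  + pres n r cv e0 rsL mL EL *\<^sub>R nv)
      - (lamKL n r cv e0 UK UL / 2) *\<^sub>R (mL - mK))"

definition flux_E :: "nat \<Rightarrow> (nat \<Rightarrow> real) \<Rightarrow> (nat \<Rightarrow> real) \<Rightarrow> (nat \<Rightarrow> real)
    \<Rightarrow> 'd::finite state \<Rightarrow> 'd state \<Rightarrow> real^'d \<Rightarrow> real" where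
  "flux_E n r cv e0 UK UL nv =
    (case UK of (rsK, mK, EK) \<Rightarrow> case UL of (rsL, mL, EL) \<Rightarrow>
      ((EK + pres n r cv e0 rsK mK EK) * (vel n rsK mK \<bullet> nv)
       + (EL + pres n r cv e0 rsL mL EL) * (vel n rsL mL \<bullet> nv)) / 2
      - lamKL n r cv e0 UK UL / 2 * (EL - EK))"

end

theory Submission
  imports Defs
begin


lemma finite_cells: "finite (cells M :: ('d::finite \<Rightarrow> nat) set)"
proof -
  have "cells M \<subseteq> PiE (UNIV::'d set) (\<lambda>_. {..<M})"
    by (auto simp: cells_def PiE_def extensional_def)
  moreover have "finite (PiE (UNIV::'d set) (\<lambda>_. {..<M}))"
    by (rule finite_PiE) auto
  ultimately show ?thesis by (rule finite_subset)
qed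

lemma cells_nonempty: "1 \<le> M \<Longrightarrow> (\<lambda>_. 0) \<in> cells M"
  by (auto simp: cells_def)

lemma shift_in: "1 \<le> M \<Longrightarrow> shift M K j s \<in> cells M"
  if "K \<in> cells M" for K
  using that by (auto simp: cells_def shift_def)

lemma inner_normal: "x \<bullet> normal j s = (if s then x $ j else - x $ j)"
  by (auto simp: normal_def inner_vec_def if_distrib cong: if_cong)

lemma continuous_Max_fin:
  fixes g :: "'k \<Rightarrow> real \<Rightarrow> real"
  assumes "finite F" "F \<noteq> {}" "\<forall>K\<in>F. continuous (at t within S) (g K)"
  shows "continuous (at t within S) (\<lambda>t. Max ((\<lambda>K. g K t) ` F))"
  using assms
proof (induction F rule: finite_ne_induct)
  case (singleton x)
  then show ?case by simp
next
  case (insert x F)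
  have "(\<lambda>t. Max ((\<lambda>K. g K t) ` insert x F)) = (\<lambda>t. max (g x t) (Max ((\<lambda>K. g K t) ` F)))"
    using insert by (auto simp: Max_insert)
  then show ?case using insert by (auto intro!: continuous_max)
qed



lemma face_bound:
  fixes x y lam a b F :: real
  assumes "x \<ge> 0" "y \<ge> x" "lam \<ge> \<bar>b\<bar>" "\<bar>b\<bar> \<le> F"
  shows "(x * a + y * b) / 2 - lam * (y - x) / 2 \<le> x * a / 2 + x * F / 2"
proof -
  define P where "P = (b - lam) * (y - x)"
  define Q where "Q = x * b"
  define R where "R = x * F"
  have 1: "P \<le> 0" unfolding P_def using assms by (intro mult_nonpos_nonneg) auto
  have 2: "Q \<le> R" unfolding Q_def R_def using assms by (intro mult_left_mono) auto
  have 3: "(x * a + y * b) / 2 - lam * (y - x) / 2 = x * a / 2 + (P + Q) / 2"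
    unfolding P_def Q_def by (simp add: field_simps)
  show ?thesis unfolding 3 R_def[symmetric] using 1 2 by (simp add: field_simps)
qed

lemma drho_lower:
  fixes rho :: "('d::finite \<Rightarrow> nat) \<Rightarrow> real \<Rightarrow> nat \<Rightarrow> real"
    and m :: "('d \<Rightarrow> nat) \<Rightarrow> real \<Rightarrow> real^'d"
    and E :: "('d \<Rightarrow> nat) \<Rightarrow> real \<Rightarrow> real"
  assumes M: "1 \<le> M" and h: "h = 1 / real M" and K: "K \<in> cells M"
    and eq: "h ^ CARD('d) * d
        + (\<Sum>j\<in>UNIV. \<Sum>s\<in>UNIV. h ^ (CARD('d) - 1) *
             flux_rho n r cv e0 (rho K t, m K t, E K t)
               (rho (shift M K j s) t, m (shift M K j s) t, E (shift M K j s) t)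
               (normal j s) i) = 0"
    and x0: "0 \<le> rho K t i"
    and ge: "\<forall>L\<in>cells M. rho K t i \<le> rho L t i"
    and cs: "\<forall>L\<in>cells M. 0 \<le> cmix_sq n r cv e0 (rho L t) (m L t) (E L t)"
    and fb: "\<forall>L\<in>cells M. norm (vel n (rho L t) (m L t)) \<le> F"
  shows "- (real CARD('d) * real M * rho K t i * F) \<le> d"
proof -
  define x where "x = rho K t i"
  define uK where "uK = vel n (rho K t) (m K t)"
  define Fl where "Fl j s = flux_rho n r cv e0 (rho K t, m K t, E K t)
               (rho (shift M K j s) t, m (shift M K j s) t, E (shift M K j s) t)
               (normal j s) i" for j s
  have hpos: "h > 0" using M h by simp
  have face: "Fl j s \<le> x * (uK \<bullet> normal j s) / 2 + x * F / 2" for j s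
  proof -
    define L where "L = shift M K j s"
    have L: "L \<in> cells M" using shift_in[OF K M] L_def by simp
    define uL where "uL = vel n (rho L t) (m L t)"
    have "\<bar>uL \<bullet> normal j s\<bar> \<le> norm uL"
      by (auto simp: inner_normal component_le_norm_cart)
    moreover have "norm uL \<le> lamKL n r cv e0 (rho K t, m K t, E K t) (rho L t, m L t, E L t)"
      using cs L by (simp add: lamKL_def wavespeed_def uL_def cmix_def le_max_iff_disj)
    ultimately show ?thesis
      unfolding Fl_def L_def[symmetric] flux_rho_def
      apply (simp add: uK_def[symmetric] uL_def[symmetric] x_def[symmetric])
      apply (rule face_bound)
      using x0 ge L fb by (auto simp: x_def uL_def)
  qed
  have pair: "(\<Sum>s\<in>UNIV. Fl j s) \<le> x * F" for j
  proof -
    have "(\<Sum>s\<in>UNIV. Fl j s) = Fl j True + Fl j False" by (simp add: UNIV_bool)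
    also have "\<dots> \<le> x * F" using face[of j True] face[of j False]
      by (simp add: inner_normal)
    finally show ?thesis .
  qed
  have sumle: "(\<Sum>j\<in>UNIV. \<Sum>s\<in>UNIV. Fl j s) \<le> real CARD('d) * (x * F)"
    using sum_mono[of UNIV "\<lambda>j. \<Sum>s\<in>UNIV. Fl j s" "\<lambda>_. x * F"] pair by simp
  have cpos: "CARD('d) \<ge> 1" by (simp add: Suc_le_eq)
  have hN: "h ^ CARD('d) = h * h ^ (CARD('d) - 1)"
    using cpos by (metis Suc_diff_1 less_le_trans zero_less_one power_Suc)
  have "h ^ (CARD('d) - 1) * (h * d + (\<Sum>j\<in>UNIV. \<Sum>s\<in>UNIV. Fl j s)) = 0"
    using eq unfolding Fl_def by (simp add: hN sum_distrib_left algebra_simps)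
  hence "h * d = - (\<Sum>j\<in>UNIV. \<Sum>s\<in>UNIV. Fl j s)" using hpos by simp
  hence "d = - real M * (\<Sum>j\<in>UNIV. \<Sum>s\<in>UNIV. Fl j s)" using h M by (simp add: field_simps)
  moreover have "real M * (\<Sum>j\<in>UNIV. \<Sum>s\<in>UNIV. Fl j s) \<le> real M * (real CARD('d) * (x * F))"
    using sumle by (intro mult_left_mono) auto
  ultimately show ?thesis by (simp add: x_def algebra_simps)
qed



lemma left_limit_ge:
  fixes g :: "real \<Rightarrow> real"
  assumes "continuous_on {0..T} g" "0 < t1" "t1 \<le> T" "\<forall>t\<in>{0..<t1}. 0 < g t"
  shows "0 \<le> g t1"
proof (rule ccontr)
  assume neg: "\<not> 0 \<le> g t1"
  have "t1 \<in> {0..T}" using assms by auto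
  then obtain d where d: "d > 0" "\<forall>t\<in>{0..T}. dist t t1 < d \<longrightarrow> dist (g t) (g t1) < - g t1"
    using assms(1) neg unfolding continuous_on_iff by (metis neg_0_less_iff_less not_le)
  define t where "t = max 0 (t1 - d / 2)"
  have t: "t \<in> {0..<t1}" "t \<in> {0..T}" "dist t t1 < d" using d assms by (auto simp: t_def dist_real_def)
  then have "dist (g t) (g t1) < - g t1" using d by auto
  hence "g t < 0" by (simp add: dist_real_def)
  moreover have "0 < g t" using assms(4) t(1) by blast
  ultimately show False by linarith
qed

lemma le_sq_plus1: "(f::real) \<le> f\<^sup>2 + 1"
proof (cases "f \<le> 1")
  case True then show ?thesis by (smt (verit) zero_le_power2)
next
  case False then have "f \<le> f * f" by (simp add: mult_le_cancel_left1) 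
  then show ?thesis by (simp add: power2_eq_square)
qed



theorem theorem3p1:
  fixes n M :: nat and h T :: real
    and r cv e0 :: "nat \<Rightarrow> real"
    and rho drho :: "('d::finite \<Rightarrow> nat) \<Rightarrow> real \<Rightarrow> nat \<Rightarrow> real"
    and m dm :: "('d \<Rightarrow> nat) \<Rightarrow> real \<Rightarrow> real^'d"
    and E dE :: "('d \<Rightarrow> nat) \<Rightarrow> real \<Rightarrow> real"
  assumes dim: "CARD('d) \<in> {1, 2, 3}"
    and n_pos: "1 \<le> n"
    and M_pos: "1 \<le> M"
    and h_def: "h = 1 / real M"
    and r_pos: "\<forall>i<n. 0 < r i"
    and cv_pos: "\<forall>i<n. 0 < cv i"
    \<comment> \<open>U_K(t) is differentiable on [0,T] and solves the semi-discrete scheme\<close>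
    and d_rho: "\<forall>K\<in>cells M. \<forall>t\<in>{0..T}. \<forall>i<n.
        ((\<lambda>s. rho K s i) has_real_derivative drho K t i) (at t within {0..T})"
    and d_m: "\<forall>K\<in>cells M. \<forall>t\<in>{0..T}.
        (m K has_vector_derivative dm K t) (at t within {0..T})"
    and d_E: "\<forall>K\<in>cells M. \<forall>t\<in>{0..T}.
        (E K has_real_derivative dE K t) (at t within {0..T})"
    and scheme_rho: "\<forall>K\<in>cells M. \<forall>t\<in>{0..T}. \<forall>i<n.
        h ^ CARD('d) * drho K t i
        + (\<Sum>j\<in>UNIV. \<Sum>s\<in>UNIV. h ^ (CARD('d) - 1) *
             flux_rho n r cv e0 (rho K t, m K t, E K t)
               (rho (shift M K j s) t, m (shift M K j s) t, E (shift M K j s) t)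
               (normal j s) i) = 0"
    and scheme_m: "\<forall>K\<in>cells M. \<forall>t\<in>{0..T}.
        h ^ CARD('d) *\<^sub>R dm K t
        + (\<Sum>j\<in>UNIV. \<Sum>s\<in>UNIV. h ^ (CARD('d) - 1) *\<^sub>R
             flux_m n r cv e0 (rho K t, m K t, E K t)
               (rho (shift M K j s) t, m (shift M K j s) t, E (shift M K j s) t)
               (normal j s)) = 0"
    and scheme_E: "\<forall>K\<in>cells M. \<forall>t\<in>{0..T}.
        h ^ CARD('d) * dE K t
        + (\<Sum>j\<in>UNIV. \<Sum>s\<in>UNIV. h ^ (CARD('d) - 1) *
             flux_E n r cv e0 (rho K t, m K t, E K t)
               (rho (shift M K j s) t, m (shift M K j s) t, E (shift M K j s) t)
               (normal j s)) = 0"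
    \<comment> \<open>the sound speed c_mix = sqrt(gamma_mix p / rho) is real along the solution\<close>
    and cmix_real: "\<forall>K\<in>cells M. \<forall>t\<in>{0..T}. 0 \<le> cmix_sq n r cv e0 (rho K t) (m K t) (E K t)"
    \<comment> \<open>positive initial partial densities\<close>
    and init_pos: "\<forall>K\<in>cells M. \<forall>i<n. 0 < rho K 0 i"
    \<comment> \<open>u_h in L^2(0,T; L^infty(Omega))\<close>
    and vel_L2Linf: "set_integrable lborel {0..T}
        (\<lambda>t. (Max ((\<lambda>K. norm (vel n (rho K t) (m K t))) ` cells M))\<^sup>2)"
  shows "\<exists>rho_bar > 0. \<forall>K\<in>cells M. \<forall>t\<in>{0..T}. \<forall>i<n. rho_bar \<le> rho K t i"
proof (cases "T < 0")
  case True
  then show ?thesis by (intro exI[of _ 1]) auto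
next
  case False
  hence T0: "0 \<le> T" by simp
  define k where "k = real CARD('d) * real M"
  define f where "f t = Max ((\<lambda>K. norm (vel n (rho K t) (m K t))) ` cells M)" for t
  define b where "b t = k * ((f t)\<^sup>2 + 1) + 1" for t
  define B where "B t = integral {0..t} b" for t
  define c where "c = Min ((\<lambda>(K,i). rho K 0 i) ` (cells M \<times> {..<n})) / 2"
  define phi where "phi t = c * exp (- B t)" for t
  have fin: "finite (cells M :: ('d \<Rightarrow> nat) set)" by (rule finite_cells)
  have ne: "cells M \<noteq> {}" using cells_nonempty[OF M_pos] by auto
  have k0: "0 \<le> k" by (simp add: k_def)
  have finI: "finite ((\<lambda>(K,i). rho K 0 i) ` (cells M \<times> {..<n}))" using fin by auto
  have neI: "(\<lambda>(K,i). rho K 0 i) ` (cells M \<times> {..<n}) \<noteq> {}"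
    using ne n_pos by (auto simp: lessThan_empty_iff)
  have c_pos: "0 < c"
    unfolding c_def using Min_gr_iff[OF finI neI] init_pos by auto
  have c_le: "2 * c \<le> rho K 0 i" if "K \<in> cells M" "i < n" for K i
  proof -
    have "Min ((\<lambda>(K,i). rho K 0 i) ` (cells M \<times> {..<n})) \<le> rho K 0 i"
      using that by (intro Min_le finI) force
    then show ?thesis by (simp add: c_def)
  qed
  have f2int: "(\<lambda>t. (f t)\<^sup>2) integrable_on {0..T}"
    using set_borel_integral_eq_integral(1)[OF vel_L2Linf] unfolding f_def .
  have bint: "b integrable_on {0..T}"
  proof -
    have "(\<lambda>t. (f t)\<^sup>2 + 1) integrable_on {0..T}"
      by (intro integrable_add f2int integrable_const_ivl)
    hence "(\<lambda>t. k *\<^sub>R ((f t)\<^sup>2 + 1) + 1) integrable_on {0..T}"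
      by (intro integrable_add integrable_cmul integrable_const_ivl f2int)
    moreover have "b = (\<lambda>t. k * ((f t)\<^sup>2 + 1) + 1)" by (simp add: b_def fun_eq_iff)
    ultimately show ?thesis by simp
  qed
  have b_pos: "1 \<le> b t" for t using k0 by (simp add: b_def)
  have Bcont: "continuous_on {0..T} B"
    unfolding B_def by (rule indefinite_integral_continuous_1[OF bint])
  have phicont: "continuous_on {0..T} phi"
    unfolding phi_def by (intro continuous_intros Bcont)
  have B0: "B 0 = 0" by (simp add: B_def)
  have rho_cont_at: "continuous (at t within {0..T}) (\<lambda>s. rho K s i)"
    if "K \<in> cells M" "i < n" "t \<in> {0..T}" for K i t
    using d_rho that by (meson DERIV_continuous)
  have rho_cont: "continuous_on {0..T} (\<lambda>s. rho K s i)" if "K \<in> cells M" "i < n" for K i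
    using rho_cont_at that continuous_on_eq_continuous_within by blast
  have m_cont_at: "continuous (at t within {0..T}) (m K)"
    if "K \<in> cells M" "t \<in> {0..T}" for K t
    using d_m that by (meson has_vector_derivative_continuous)
  have main: "\<forall>t\<in>{0..T}. \<forall>K\<in>cells M. \<forall>i<n. phi t < rho K t i"
  proof (rule ccontr)
    assume neg: "\<not> ?thesis"
    define S where "S = {t\<in>{0..T}. \<exists>K\<in>cells M. \<exists>i<n. rho K t i \<le> phi t}"
    have Sne: "S \<noteq> {}" using neg unfolding S_def by force
    have Seq: "S = (\<Union>K\<in>cells M. \<Union>i\<in>{..<n}. {0..T} \<inter> (\<lambda>t. rho K t i - phi t) -` {..0})"
      unfolding S_def by (auto simp: lessThan_iff) (meson lessThan_iff)+
    have Sclosed: "closed S"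
      unfolding Seq
      by (intro closed_UN fin finite_lessThan ballI continuous_closed_preimage
           continuous_intros rho_cont phicont closed_atMost closed_atLeastAtMost) auto
    have Sbdd: "bdd_below S" unfolding S_def by (rule bdd_belowI[of _ 0]) auto
    define t1 where "t1 = Inf S"
    have t1S: "t1 \<in> S" unfolding t1_def by (rule closed_contains_Inf[OF Sne Sbdd Sclosed])
    have t1le: "t1 \<le> t" if "t \<in> S" for t unfolding t1_def by (rule cInf_lower[OF that Sbdd])
    have t1T: "0 \<le> t1" "t1 \<le> T" using t1S unfolding S_def by auto
    have before: "phi t < rho K t i" if "t \<in> {0..<t1}" "K \<in> cells M" "i < n" for t K i
    proof (rule ccontr)
      assume "\<not> phi t < rho K t i"
      hence "t \<in> S" using that t1T unfolding S_def by force
      with t1le that show False by force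
    qed
    have t1pos: "0 < t1"
    proof (rule ccontr)
      assume "\<not> 0 < t1"
      hence "t1 = 0" using t1T by simp
      then obtain K i where Ki: "K \<in> cells M" "i < n" "rho K 0 i \<le> phi 0"
        using t1S unfolding S_def by auto
      have "phi 0 = c" by (simp add: phi_def B0)
      with Ki c_le[OF Ki(1,2)] c_pos show False by simp
    qed
    have t1in: "t1 \<in> {0..T}" using t1T by simp
    have atge: "phi t1 \<le> rho L t1 j" if "L \<in> cells M" "j < n" for L j
    proof -
      have "0 \<le> (\<lambda>t. rho L t j - phi t) t1"
        by (rule left_limit_ge[OF _ t1pos t1T(2)])
           (use before that in \<open>auto intro!: continuous_intros rho_cont phicont\<close>)
      thus ?thesis by simp
    qed
    obtain K i where Ki: "K \<in> cells M" "i < n" "rho K t1 i \<le> phi t1"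
      using t1S unfolding S_def by auto
    have xeq: "rho K t1 i = phi t1" using Ki atge[OF Ki(1,2)] by simp
    define x where "x = phi t1"
    have xpos: "0 < x" using c_pos by (simp add: x_def phi_def)
    have tot_pos: "rho_tot n (rho L t1) \<noteq> 0" if "L \<in> cells M" for L
    proof -
      have "0 < (\<Sum>j<n. rho L t1 j)"
        using n_pos atge[OF that] xpos unfolding x_def
        by (intro sum_pos) (auto intro: less_le_trans)
      thus ?thesis by (simp add: rho_tot_def)
    qed
    have ucont: "continuous (at t1 within {0..T}) (\<lambda>t. norm (vel n (rho L t) (m L t)))"
      if "L \<in> cells M" for L
    proof -
      have r: "((\<lambda>t. rho L t j) \<longlongrightarrow> rho L t1 j) (at t1 within {0..T})" if "j \<in> {..<n}" for j
        using rho_cont_at[OF \<open>L \<in> cells M\<close> _ t1in] that unfolding continuous_within by auto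
      have mm: "(m L \<longlongrightarrow> m L t1) (at t1 within {0..T})"
        using m_cont_at[OF that t1in] unfolding continuous_within .
      show ?thesis
        unfolding continuous_within vel_def rho_tot_def
        using tot_pos[OF that] unfolding rho_tot_def
        by (intro tendsto_intros r mm tendsto_sum) auto
    qed
    have fcont: "continuous (at t1 within {0..T}) f"
      unfolding f_def by (rule continuous_Max_fin[OF fin ne]) (use ucont in auto)
    have bcont: "continuous (at t1 within {0..T}) b"
      unfolding b_def by (intro continuous_intros fcont)
    have Bder: "(B has_real_derivative b t1) (at t1 within {0..T})"
      using integral_has_vector_derivative_continuous_at[OF bint, of t1 "{}"] t1in bcont
      unfolding has_real_derivative_iff_has_vector_derivative B_def by simp
    have phider: "(phi has_real_derivative - (x * b t1)) (at t1 within {0..T})"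
      unfolding phi_def x_def by (rule derivative_eq_intros Bder | simp)+
    have gder: "((\<lambda>t. rho K t i - phi t) has_real_derivative drho K t1 i + x * b t1)
                  (at t1 within {0..T})"
      using DERIV_diff[OF d_rho[rule_format, OF Ki(1) t1in Ki(2)] phider] by simp
    have fb: "\<forall>L\<in>cells M. norm (vel n (rho L t1) (m L t1)) \<le> f t1"
      unfolding f_def using fin by (auto intro: Max_ge)
    have dlow: "- (real CARD('d) * real M * rho K t1 i * f t1) \<le> drho K t1 i"
      by (rule drho_lower[where rho=rho and m=m and E=E and t=t1 and i=i and n=n and r=r
            and cv=cv and ?e0.0=e0 and d="drho K t1 i" and F="f t1", OF M_pos h_def Ki(1)])
         (use scheme_rho Ki t1in cmix_real fb atge xeq xpos in \<open>auto simp: x_def\<close>)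
    have "k * x * f t1 \<le> k * x * ((f t1)\<^sup>2 + 1)"
      using k0 xpos le_sq_plus1 by (intro mult_left_mono) auto
    hence "0 < drho K t1 i + x * b t1"
      using dlow xpos unfolding b_def k_def xeq x_def
      by (simp add: algebra_simps)
    from has_real_derivative_pos_inc_left[OF gder this]
    obtain d where d: "d > 0" "\<forall>h>0. t1 - h \<in> {0..T} \<longrightarrow> h < d \<longrightarrow>
        rho K (t1 - h) i - phi (t1 - h) < rho K t1 i - phi t1" by blast
    define hh where "hh = min (d / 2) t1"
    have hh: "hh > 0" "t1 - hh \<in> {0..<t1}" "t1 - hh \<in> {0..T}" "hh < d"
      using d t1pos t1T by (auto simp: hh_def)
    have "rho K (t1 - hh) i - phi (t1 - hh) < 0" using d(2) hh xeq by auto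
    moreover have "phi (t1 - hh) < rho K (t1 - hh) i" using before[OF hh(2) Ki(1,2)] .
    ultimately show False by simp
  qed
  show ?thesis
  proof (intro exI[of _ "c * exp (- B T)"] conjI ballI allI impI)
    show "0 < c * exp (- B T)" using c_pos by simp
    fix K :: "'d \<Rightarrow> nat" and t i assume K: "K \<in> cells M" and t: "t \<in> {0..T}" and i: "i < n"
    have "B t \<le> B T"
      unfolding B_def using t b_pos
      by (intro integral_subset_le integrable_on_subinterval[OF bint] bint)
         (auto intro: order_trans[OF zero_le_one])
    hence "c * exp (- B T) \<le> phi t" using c_pos by (simp add: phi_def)
    also have "\<dots> < rho K t i" using main K t i by blast
    finally show "c * exp (- B T) \<le> rho K t i" by simp
  qed
qed

end
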